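(* Let $k\ge 3$ be odd and $r\ge 2$ an integer. Let $G$ be the graph with vertex set $\{u,v_1,\dots,v_{k-1},s_1,\dots,s_{r-1},w_1,\dots,w_{r-1}\}$ and edge set $\{v_{i-1}v_i\mid 1\le i\le k\}\cup\{s_{i-1}s_i\mid 1\le i\le r-1\}\cup\{w_{i-1}w_i\mid 1\le i\le r-1\}$, where $v_0=v_k=s_0=w_0=u$ (i.e. a cycle $C_k$ with two paths on $r$ vertices each attached by an endpoint to the same cycle vertex $u$). Then $G$ is not odd-periodic, i.e. the Grover walk on $G$ is either not periodic or has even period.
   Context: For a simple connected finite graph $G=(V,E)$, let $\mathcal{A}=\{(u,v),(v,u)\mid uv\in E\}$ be the set of arcs; for an arc $e=(u,v)$ write $o(e)=u$, $t(e)=v$, $\bar e=(v,u)$. The Grover walk has time evolution $U$ on $\mathbb{C}^{\mathcal{A}}$ with $U_{e,f}=2/\deg t(f)$ if $t(f)=o(e)$, $e\neq\bar f$; $U_{e,f}=2/\deg t(f)-1$ if $e=\bar f$; $0$ otherwise. $G$ is periodic if $U^m=I$ for some positive integer $m$; the least such $m$ is the period; $G$ is odd-periodic if it is periodic with odd period. *)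

theory Defs
  imports Complex_Main
begin

text \<open>A simple graph is given by its edge set Es of unordered pairs (2-element sets).\<close>

definition arcs :: "'a set set \<Rightarrow> ('a \<times> 'a) set" where
  "arcs Es = {(a, b). a \<noteq> b \<and> {a, b} \<in> Es}"

definition deg :: "'a set set \<Rightarrow> 'a \<Rightarrow> nat" where
  "deg Es v = card {w. w \<noteq> v \<and> {v, w} \<in> Es}"

text \<open>Grover time evolution, entry U(e,f), with o(e) = fst e, t(e) = snd e.\<close>
definition grover :: "'a set set \<Rightarrow> ('a \<times> 'a) \<Rightarrow> ('a \<times> 'a) \<Rightarrow> real" where
  "grover Es e f =
     (if snd f = fst e \<and> e \<noteq> prod.swap f then 2 / real (deg Es (snd f))
      else if e = prod.swap f then 2 / real (deg Es (snd f)) - 1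
      else 0)"

definition mat_mult :: "'b set \<Rightarrow> ('b \<Rightarrow> 'b \<Rightarrow> real) \<Rightarrow> ('b \<Rightarrow> 'b \<Rightarrow> real) \<Rightarrow> 'b \<Rightarrow> 'b \<Rightarrow> real" where
  "mat_mult A M N e f = (\<Sum>g\<in>A. M e g * N g f)"

definition mat_id :: "'b \<Rightarrow> 'b \<Rightarrow> real" where
  "mat_id e f = (if e = f then 1 else 0)"

fun mat_pow :: "'b set \<Rightarrow> ('b \<Rightarrow> 'b \<Rightarrow> real) \<Rightarrow> nat \<Rightarrow> 'b \<Rightarrow> 'b \<Rightarrow> real" where
  "mat_pow A M 0 = mat_id"
| "mat_pow A M (Suc n) = mat_mult A M (mat_pow A M n)"

definition grover_pow_id :: "'a set set \<Rightarrow> nat \<Rightarrow> bool" where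
  "grover_pow_id Es m \<longleftrightarrow>
     (\<forall>e\<in>arcs Es. \<forall>f\<in>arcs Es. mat_pow (arcs Es) (grover Es) m e f = mat_id e f)"

definition periodic :: "'a set set \<Rightarrow> bool" where
  "periodic Es \<longleftrightarrow> (\<exists>m>0. grover_pow_id Es m)"

definition period :: "'a set set \<Rightarrow> nat" where
  "period Es = (LEAST m. m > 0 \<and> grover_pow_id Es m)"

definition odd_periodic :: "'a set set \<Rightarrow> bool" where
  "odd_periodic Es \<longleftrightarrow> periodic Es \<and> odd (period Es)"

datatype vtx = U | Vc nat | Sp nat | Wp nat

definition cyc :: "nat \<Rightarrow> nat \<Rightarrow> vtx" where
  "cyc k i = (if i = 0 \<or> i = k then U else Vc i)"

definition spath :: "nat \<Rightarrow> vtx" where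
  "spath i = (if i = 0 then U else Sp i)"

definition wpath :: "nat \<Rightarrow> vtx" where
  "wpath i = (if i = 0 then U else Wp i)"

definition cycle_two_tails_verts :: "nat \<Rightarrow> nat \<Rightarrow> vtx set" where
  "cycle_two_tails_verts k r =
     {U} \<union> Vc ` {1..k-1} \<union> Sp ` {1..r-1} \<union> Wp ` {1..r-1}"

definition cycle_two_tails :: "nat \<Rightarrow> nat \<Rightarrow> vtx set set" where
  "cycle_two_tails k r =
     {{cyc k (i - 1), cyc k i} | i. 1 \<le> i \<and> i \<le> k}
   \<union> {{spath (i - 1), spath i} | i. 1 \<le> i \<and> i \<le> r - 1}
   \<union> {{wpath (i - 1), wpath i} | i. 1 \<le> i \<and> i \<le> r - 1}"

end

theory Submission
  imports Defs
begin


definition nbrs :: "'a set set \<Rightarrow> 'a \<Rightarrow> 'a set" where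
  "nbrs Es v = {w. w \<noteq> v \<and> {v, w} \<in> Es}"

lemma deg_nbrs: "deg Es v = card (nbrs Es v)"
  by (simp add: deg_def nbrs_def)

lemma arcs_iff: "(a, b) \<in> arcs Es \<longleftrightarrow> b \<in> nbrs Es a"
  by (auto simp: arcs_def nbrs_def)

lemma grover_deg2:
  assumes "nbrs Es v = {x, y}" "x \<noteq> y" "e \<in> arcs Es"
  shows "grover Es e (x, v) = (if e = (v, y) then 1 else 0)"
proof -
  obtain a b where e: "e = (a, b)" by force
  have d: "deg Es v = 2" using assms by (simp add: deg_nbrs)
  have "b \<in> nbrs Es a" using assms e arcs_iff by metis
  then show ?thesis using assms d e by (auto simp: grover_def)
qed

lemma grover_deg1:
  assumes "nbrs Es v = {x}" "e \<in> arcs Es"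
  shows "grover Es e (x, v) = (if e = (v, x) then 1 else 0)"
proof -
  obtain a b where e: "e = (a, b)" by force
  have d: "deg Es v = 1" using assms by (simp add: deg_nbrs)
  have "b \<in> nbrs Es a" using assms e arcs_iff by metis
  then show ?thesis using assms d e by (auto simp: grover_def)
qed

lemma grover_deg4:
  assumes "nbrs Es v = {a1, a2, a3, a4}" "distinct [a1, a2, a3, a4]" "e \<in> arcs Es"
    "x \<in> nbrs Es v"
  shows "grover Es e (x, v) = (if fst e = v then (if e = (v, x) then -1/2 else 1/2) else 0)"
proof -
  have d: "deg Es v = 4" using assms by (simp add: deg_nbrs)
  show ?thesis using assms d by (auto simp: grover_def)
qed


definition tp :: "(nat \<Rightarrow> vtx) \<Rightarrow> nat \<Rightarrow> vtx" where
  "tp T i = (if i = 0 then U else T i)"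

lemma spath_tp: "spath = tp Sp" and wpath_tp: "wpath = tp Wp"
  by (auto simp: fun_eq_iff spath_def wpath_def tp_def)

lemma cyc_not_tail: "cyc k i \<noteq> Sp j" "cyc k i \<noteq> Wp j" "Sp j \<noteq> cyc k i" "Wp j \<noteq> cyc k i"
  by (auto simp: cyc_def)

lemma edge_Sp:
  "{Sp i, y} \<in> cycle_two_tails k r \<longleftrightarrow>
     1 \<le> i \<and> i \<le> r - 1 \<and> (y = tp Sp (i - 1) \<or> (y = Sp (i + 1) \<and> i + 1 \<le> r - 1))"
proof
  assume "{Sp i, y} \<in> cycle_two_tails k r"
  then consider (c) ia where "{Sp i, y} = {cyc k (ia - 1), cyc k ia}"
    | (s) ia where "{Sp i, y} = {tp Sp (ia - 1), tp Sp ia}" "1 \<le> ia" "ia \<le> r - 1"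
    | (w) ia where "{Sp i, y} = {tp Wp (ia - 1), tp Wp ia}"
    unfolding cycle_two_tails_def spath_tp wpath_tp by blast
  then show "1 \<le> i \<and> i \<le> r - 1 \<and> (y = tp Sp (i - 1) \<or> (y = Sp (i + 1) \<and> i + 1 \<le> r - 1))"
  proof cases
    case c
    then show ?thesis by (auto simp: doubleton_eq_iff cyc_not_tail)
  next
    case s
    then show ?thesis by (auto simp: doubleton_eq_iff tp_def split: if_splits)
  next
    case w
    then show ?thesis by (auto simp: doubleton_eq_iff tp_def split: if_splits)
  qed
next
  assume H: "1 \<le> i \<and> i \<le> r - 1 \<and> (y = tp Sp (i - 1) \<or> (y = Sp (i + 1) \<and> i + 1 \<le> r - 1))"
  have mem: "{tp Sp (j - 1), tp Sp j} \<in> cycle_two_tails k r" if "1 \<le> j" "j \<le> r - 1" for j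
    unfolding cycle_two_tails_def spath_tp wpath_tp
    by (rule UnI1, rule UnI2, rule CollectI, rule exI[of _ j], insert that, simp)
  from H consider "1 \<le> i" "i \<le> r - 1" "y = tp Sp (i - 1)" | "1 \<le> i" "y = Sp (i + 1)" "i + 1 \<le> r - 1"
    by blast
  then show "{Sp i, y} \<in> cycle_two_tails k r"
  proof cases
    case 1
    then have "{Sp i, y} = {tp Sp (i - 1), tp Sp i}" by (auto simp: tp_def)
    then show ?thesis using mem 1 by simp
  next
    case 2
    then have "{Sp i, y} = {tp Sp (i + 1 - 1), tp Sp (i + 1)}" by (auto simp: tp_def)
    then show ?thesis using mem[of "i+1"] 2 by simp
  qed
qed

lemma edge_Wp:
  "{Wp i, y} \<in> cycle_two_tails k r \<longleftrightarrow>
     1 \<le> i \<and> i \<le> r - 1 \<and> (y = tp Wp (i - 1) \<or> (y = Wp (i + 1) \<and> i + 1 \<le> r - 1))"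
proof
  assume "{Wp i, y} \<in> cycle_two_tails k r"
  then consider (c) ia where "{Wp i, y} = {cyc k (ia - 1), cyc k ia}"
    | (s) ia where "{Wp i, y} = {tp Wp (ia - 1), tp Wp ia}" "1 \<le> ia" "ia \<le> r - 1"
    | (w) ia where "{Wp i, y} = {tp Sp (ia - 1), tp Sp ia}"
    unfolding cycle_two_tails_def spath_tp wpath_tp by blast
  then show "1 \<le> i \<and> i \<le> r - 1 \<and> (y = tp Wp (i - 1) \<or> (y = Wp (i + 1) \<and> i + 1 \<le> r - 1))"
  proof cases
    case c
    then show ?thesis by (auto simp: doubleton_eq_iff cyc_not_tail)
  next
    case s
    then show ?thesis by (auto simp: doubleton_eq_iff tp_def split: if_splits)
  next
    case w
    then show ?thesis by (auto simp: doubleton_eq_iff tp_def split: if_splits)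
  qed
next
  assume H: "1 \<le> i \<and> i \<le> r - 1 \<and> (y = tp Wp (i - 1) \<or> (y = Wp (i + 1) \<and> i + 1 \<le> r - 1))"
  have mem: "{tp Wp (j - 1), tp Wp j} \<in> cycle_two_tails k r" if "1 \<le> j" "j \<le> r - 1" for j
    unfolding cycle_two_tails_def spath_tp wpath_tp
    by (rule UnI2, rule CollectI, rule exI[of _ j], insert that, simp)
  from H consider "1 \<le> i" "i \<le> r - 1" "y = tp Wp (i - 1)" | "1 \<le> i" "y = Wp (i + 1)" "i + 1 \<le> r - 1"
    by blast
  then show "{Wp i, y} \<in> cycle_two_tails k r"
  proof cases
    case 1
    then have "{Wp i, y} = {tp Wp (i - 1), tp Wp i}" by (auto simp: tp_def)
    then show ?thesis using mem 1 by simp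
  next
    case 2
    then have "{Wp i, y} = {tp Wp (i + 1 - 1), tp Wp (i + 1)}" by (auto simp: tp_def)
    then show ?thesis using mem[of "i+1"] 2 by simp
  qed
qed


lemma edge_U:
  assumes "k \<ge> 3" "r \<ge> 2"
  shows "{U, y} \<in> cycle_two_tails k r \<longleftrightarrow> y \<in> {Vc 1, Vc (k - 1), Sp 1, Wp 1}"
proof
  assume "{U, y} \<in> cycle_two_tails k r"
  then consider (c) ia where "{U, y} = {cyc k (ia - 1), cyc k ia}" "1 \<le> ia" "ia \<le> k"
    | (s) ia where "{U, y} = {tp Sp (ia - 1), tp Sp ia}" "1 \<le> ia" "ia \<le> r - 1"
    | (w) ia where "{U, y} = {tp Wp (ia - 1), tp Wp ia}" "1 \<le> ia" "ia \<le> r - 1"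
    unfolding cycle_two_tails_def spath_tp wpath_tp by blast
  then show "y \<in> {Vc 1, Vc (k - 1), Sp 1, Wp 1}"
  proof cases
    case c
    then show ?thesis using assms by (auto simp: doubleton_eq_iff cyc_def split: if_splits)
  next
    case s
    then show ?thesis by (auto simp: doubleton_eq_iff tp_def split: if_splits)
  next
    case w
    then show ?thesis by (auto simp: doubleton_eq_iff tp_def split: if_splits)
  qed
next
  assume H: "y \<in> {Vc 1, Vc (k - 1), Sp 1, Wp 1}"
  have memc: "{cyc k (j - 1), cyc k j} \<in> cycle_two_tails k r" if "1 \<le> j" "j \<le> k" for j
    unfolding cycle_two_tails_def spath_tp wpath_tp
    by (rule UnI1, rule UnI1, rule CollectI, rule exI[of _ j], insert that, simp)
  have mems: "{tp Sp (j - 1), tp Sp j} \<in> cycle_two_tails k r" if "1 \<le> j" "j \<le> r - 1" for j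
    unfolding cycle_two_tails_def spath_tp wpath_tp
    by (rule UnI1, rule UnI2, rule CollectI, rule exI[of _ j], insert that, simp)
  have memw: "{tp Wp (j - 1), tp Wp j} \<in> cycle_two_tails k r" if "1 \<le> j" "j \<le> r - 1" for j
    unfolding cycle_two_tails_def spath_tp wpath_tp
    by (rule UnI2, rule CollectI, rule exI[of _ j], insert that, simp)
  have e1: "{U, Vc 1} = {cyc k (1 - 1), cyc k 1}" using assms by (auto simp: cyc_def)
  have e2: "{U, Vc (k - 1)} = {cyc k (k - 1), cyc k k}" using assms by (auto simp: cyc_def)
  have e3: "{U, Sp 1} = {tp Sp (1 - 1), tp Sp 1}" by (auto simp: tp_def)
  have e4: "{U, Wp 1} = {tp Wp (1 - 1), tp Wp 1}" by (auto simp: tp_def)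
  have "1 \<le> r - 1" using assms by simp
  from H consider "y = Vc 1" | "y = Vc (k - 1)" | "y = Sp 1" | "y = Wp 1" by blast
  then show "{U, y} \<in> cycle_two_tails k r"
  proof cases
    case 1 then show ?thesis using e1 memc[of 1] assms by simp
  next
    case 2 then show ?thesis using e2 memc[of k] assms by simp
  next
    case 3 then show ?thesis using e3 mems[of 1] \<open>1 \<le> r - 1\<close> by simp
  next
    case 4 then show ?thesis using e4 memw[of 1] \<open>1 \<le> r - 1\<close> by simp
  qed
qed


lemma edge_T:
  assumes "T = Sp \<or> T = Wp"
  shows "{T i, y} \<in> cycle_two_tails k r \<longleftrightarrow>
     1 \<le> i \<and> i \<le> r - 1 \<and> (y = tp T (i - 1) \<or> (y = T (i + 1) \<and> i + 1 \<le> r - 1))"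
  using assms edge_Sp edge_Wp by blast


lemma nbrs_T_mid:
  assumes "T = Sp \<or> T = Wp" "1 \<le> i" "i + 1 \<le> r - 1"
  shows "nbrs (cycle_two_tails k r) (T i) = {tp T (i - 1), T (i + 1)}"
proof (rule set_eqI)
  fix y
  have "T i \<noteq> tp T (i - 1)" "T i \<noteq> T (i + 1)" using assms by (auto simp: tp_def)
  moreover have "i \<le> r - 1" using assms by simp
  ultimately show "y \<in> nbrs (cycle_two_tails k r) (T i) \<longleftrightarrow> y \<in> {tp T (i - 1), T (i + 1)}"
    unfolding nbrs_def mem_Collect_eq edge_T[OF assms(1)] using assms by blast
qed

lemma nbrs_T_leaf:
  assumes "T = Sp \<or> T = Wp" "r \<ge> 2"
  shows "nbrs (cycle_two_tails k r) (T (r - 1)) = {tp T (r - 2)}"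
proof (rule set_eqI)
  fix y
  have "T (r - 1) \<noteq> tp T (r - 2)" using assms by (auto simp: tp_def)
  moreover have "r - 1 - 1 = r - 2" "1 \<le> r - 1" "\<not> r - 1 + 1 \<le> r - 1" using assms by auto
  ultimately show "y \<in> nbrs (cycle_two_tails k r) (T (r - 1)) \<longleftrightarrow> y \<in> {tp T (r - 2)}"
    unfolding nbrs_def mem_Collect_eq edge_T[OF assms(1)] by auto
qed

lemma nbrs_U:
  assumes "k \<ge> 3" "r \<ge> 2"
  shows "nbrs (cycle_two_tails k r) U = {Vc 1, Vc (k - 1), Sp 1, Wp 1}"
  unfolding nbrs_def edge_U[OF assms] by auto


lemma finite_G: "finite (cycle_two_tails k r)"
proof -
  have "cycle_two_tails k r = (\<lambda>i. {cyc k (i - 1), cyc k i}) ` {1..k}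
     \<union> (\<lambda>i. {spath (i - 1), spath i}) ` {1..r-1} \<union> (\<lambda>i. {wpath (i - 1), wpath i}) ` {1..r-1}"
    unfolding cycle_two_tails_def by auto
  then show ?thesis by simp
qed

lemma finite_arcs: "finite (arcs (cycle_two_tails k r))"
proof -
  have "arcs (cycle_two_tails k r) \<subseteq> \<Union>(cycle_two_tails k r) \<times> \<Union>(cycle_two_tails k r)"
    unfolding arcs_def by auto
  moreover have "finite (\<Union>(cycle_two_tails k r))"
    using finite_G by (rule finite_Union) (auto simp: cycle_two_tails_def)
  ultimately show ?thesis by (meson finite_SigmaI finite_subset)
qed

definition pos :: "nat \<Rightarrow> (nat \<Rightarrow> vtx) \<Rightarrow> nat \<Rightarrow> vtx \<times> vtx" where
  "pos r T j = (if j < r - 1 then (tp T j, tp T (j + 1))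
                else (tp T (2 * (r - 1) - j), tp T (2 * (r - 1) - j - 1)))"


lemma pos_arc:
  assumes "k \<ge> 3" "r \<ge> 2" "T = Sp \<or> T = Wp" "j < 2 * (r - 1)"
  shows "pos r T j \<in> arcs (cycle_two_tails k r)"
proof (cases "j < r - 1")
  case True
  show ?thesis
  proof (cases "j = 0")
    case True
    have "T 1 \<in> nbrs (cycle_two_tails k r) U" using nbrs_U[OF assms(1,2)] assms(3) by auto
    then show ?thesis using True \<open>j < r - 1\<close> by (simp add: pos_def arcs_iff tp_def)
  next
    case False
    have "T (j + 1) \<in> nbrs (cycle_two_tails k r) (T j)"
      unfolding nbrs_def mem_Collect_eq edge_T[OF assms(3)] using False True assms(3) by auto
    then show ?thesis using True False by (simp add: pos_def arcs_iff tp_def)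
  qed
next
  case False
  define i where "i = 2 * (r - 1) - j - 1"
  have i: "2 * (r - 1) - j = i + 1" "i + 1 \<le> r - 1" using False assms(4) by (auto simp: i_def)
  have "tp T i \<in> nbrs (cycle_two_tails k r) (T (i + 1))"
    unfolding nbrs_def mem_Collect_eq edge_T[OF assms(3)] using i assms(3)
    by (auto simp: tp_def)
  then show ?thesis using False i by (simp add: pos_def arcs_iff tp_def)
qed


lemma step_mid:
  assumes "k \<ge> 3" "r \<ge> 2" "T = Sp \<or> T = Wp" "j + 1 < 2 * (r - 1)"
    "e \<in> arcs (cycle_two_tails k r)"
  shows "grover (cycle_two_tails k r) e (pos r T j) = (if e = pos r T (j + 1) then 1 else 0)"
proof -
  have Tinj: "T a = T b \<longleftrightarrow> a = b" for a b using assms(3) by auto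
  have TU: "T a \<noteq> U" "U \<noteq> T a" for a using assms(3) by auto
  consider (a) "j + 1 < r - 1" | (b) "j + 1 = r - 1" | (c) "j \<ge> r - 1" by linarith
  then show ?thesis
  proof cases
    case a
    have p1: "pos r T j = (tp T j, T (j + 1))" using a by (simp add: pos_def tp_def)
    have p2: "pos r T (j + 1) = (T (j + 1), T (j + 1 + 1))" using a by (simp add: pos_def tp_def)
    have n: "nbrs (cycle_two_tails k r) (T (j + 1)) = {tp T j, T (j + 1 + 1)}"
      using nbrs_T_mid[OF assms(3), of "j + 1" r k] a by simp
    have "tp T j \<noteq> T (j + 1 + 1)" using Tinj TU by (auto simp: tp_def)
    then show ?thesis unfolding p1 p2 using grover_deg2[OF n _ assms(5)] by blast
  next
    case b
    have jj: "j = r - 2" "j + 1 = r - 1" "j < r - 1" using b by auto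
    have "pos r T j = (tp T j, tp T (j + 1))" using jj(3) by (simp add: pos_def)
    also have "\<dots> = (tp T (r - 2), T (r - 1))" using jj(1,2) assms(2) by (simp add: tp_def)
    finally have p1: "pos r T j = (tp T (r - 2), T (r - 1))" .
    have "\<not> j + 1 < r - 1" "2 * (r - 1) - (j + 1) = r - 1" "r - 1 - 1 = r - 2" "r - 1 \<noteq> 0"
      using b assms(2) by auto
    then have p2: "pos r T (j + 1) = (T (r - 1), tp T (r - 2))"
      unfolding pos_def by (simp only: if_False tp_def)
    show ?thesis unfolding p1 p2 using grover_deg1[OF nbrs_T_leaf[OF assms(3,2)] assms(5)] by blast
  next
    case c
    define i where "i = 2 * (r - 1) - j - 1"
    have i: "2 * (r - 1) - j = i + 1" "i + 1 \<le> r - 1" "1 \<le> i" using c assms(4) by (auto simp: i_def)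
    have p1: "pos r T j = (T (i + 1), T i)" using c i by (simp add: pos_def tp_def)
    have "\<not> j + 1 < r - 1" "2 * (r - 1) - (j + 1) = i" "i \<noteq> 0" "2 * (r - 1) - (j + 1) - 1 = i - 1"
      using c i by (auto simp: i_def)
    then have p2: "pos r T (j + 1) = (T i, tp T (i - 1))"
      unfolding pos_def by (simp only: if_False tp_def)
    have n: "nbrs (cycle_two_tails k r) (T i) = {T (i + 1), tp T (i - 1)}"
      using nbrs_T_mid[OF assms(3), of i r k] i by auto
    have "T (i + 1) \<noteq> tp T (i - 1)" using Tinj TU by (auto simp: tp_def)
    then show ?thesis unfolding p1 p2 using grover_deg2[OF n _ assms(5)] by blast
  qed
qed

lemma step_last:
  assumes "k \<ge> 3" "r \<ge> 2" "T = Sp \<or> T = Wp" "e \<in> arcs (cycle_two_tails k r)"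
  shows "grover (cycle_two_tails k r) e (pos r T (2 * (r - 1) - 1)) =
     (if fst e = U then (if e = (U, T 1) then -1/2 else 1/2) else 0)"
proof -
  have TU: "T a \<noteq> U" for a using assms(3) by auto
  have "\<not> 2 * (r - 1) - 1 < r - 1" "2 * (r - 1) - (2 * (r - 1) - 1) = 1" using assms(2) by auto
  then have p: "pos r T (2 * (r - 1) - 1) = (T 1, U)" using TU
    by (simp add: pos_def tp_def)
  have d: "distinct [Vc 1, Vc (k - 1), Sp 1, Wp 1]" using assms(1) by auto
  have x: "T 1 \<in> nbrs (cycle_two_tails k r) U" using nbrs_U[OF assms(1,2)] assms(3) by auto
  show ?thesis unfolding p using grover_deg4[OF nbrs_U[OF assms(1,2)] d assms(4) x] .
qed


lemma sum_two:
  assumes "finite A" "a \<in> A" "b \<in> A"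
  shows "(\<Sum>g\<in>A. F g * ((s::real) * ((if g = a then 1 else 0) - (if g = b then 1 else 0))))
         = s * (F a - F b)"
proof -
  have "(\<Sum>g\<in>A. F g * (s * ((if g = a then 1 else 0) - (if g = b then 1 else 0))))
     = (\<Sum>g\<in>A. (if g = a then s * F g else 0)) - (\<Sum>g\<in>A. (if g = b then s * F g else 0))"
    by (subst sum_subtractf[symmetric]) (rule sum.cong, auto simp: algebra_simps)
  also have "\<dots> = s * F a - s * F b" using assms by (simp add: sum.delta')
  finally show ?thesis by (simp add: algebra_simps)
qed

definition psi :: "nat \<Rightarrow> nat \<Rightarrow> vtx \<times> vtx \<Rightarrow> real" where
  "psi r n e = (-1) ^ (n div (2 * (r - 1))) *
     ((if e = pos r Sp (n mod (2 * (r - 1))) then 1 else 0)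
      - (if e = pos r Wp (n mod (2 * (r - 1))) then 1 else 0))"

lemma main_claim:
  assumes "k \<ge> 3" "r \<ge> 2" "e \<in> arcs (cycle_two_tails k r)"
  shows "mat_pow (arcs (cycle_two_tails k r)) (grover (cycle_two_tails k r)) n e (U, Sp 1)
       - mat_pow (arcs (cycle_two_tails k r)) (grover (cycle_two_tails k r)) n e (U, Wp 1)
       = psi r n e"
  using assms(3)
proof (induction n arbitrary: e)
  case 0
  have "pos r T 0 = (U, T 1)" if "T = Sp \<or> T = Wp" for T
    using assms(2) that by (auto simp: pos_def tp_def)
  then show ?case by (simp add: psi_def mat_id_def)
next
  case (Suc n)
  define A where "A = arcs (cycle_two_tails k r)"
  define M where "M = grover (cycle_two_tails k r)"
  define L where "L = 2 * (r - 1)"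
  define jj where "jj = n mod L"
  define sg :: real where "sg = (-1) ^ (n div L)"
  have L: "L > 0" using assms(2) by (simp add: L_def)
  have jj: "jj < L" using L by (simp add: jj_def)
  have psin: "psi r n g = sg * ((if g = pos r Sp jj then 1 else 0) - (if g = pos r Wp jj then 1 else 0))"
    for g by (simp add: psi_def sg_def jj_def L_def)
  have "mat_pow A M (Suc n) e (U, Sp 1) - mat_pow A M (Suc n) e (U, Wp 1)
     = (\<Sum>g\<in>A. M e g * (mat_pow A M n g (U, Sp 1) - mat_pow A M n g (U, Wp 1)))"
    by (simp add: mat_mult_def sum_subtractf[symmetric] algebra_simps)
  also have "\<dots> = (\<Sum>g\<in>A. M e g * psi r n g)"
    using Suc.IH by (intro sum.cong) (auto simp: A_def M_def)
  also have "\<dots> = sg * (M e (pos r Sp jj) - M e (pos r Wp jj))"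
    unfolding psin
    by (rule sum_two) (use finite_arcs pos_arc[OF assms(1,2)] jj in \<open>auto simp: A_def L_def\<close>)
  also have "\<dots> = psi r (Suc n) e"
  proof (cases "jj + 1 < L")
    case True
    have "Suc n mod L = jj + 1" "Suc n div L = n div L" using True
      by (auto simp: mod_Suc div_Suc jj_def)
    then show ?thesis
      using step_mid[OF assms(1,2) _ _ Suc.prems, of Sp jj] step_mid[OF assms(1,2) _ _ Suc.prems, of Wp jj]
        True
      by (simp add: psi_def M_def sg_def L_def)
  next
    case False
    then have j1: "jj = L - 1" using jj by simp
    have "Suc n mod L = 0" "Suc n div L = Suc (n div L)" using j1 L
      by (auto simp: mod_Suc div_Suc jj_def)
    moreover have "pos r T 0 = (U, T 1)" if "T = Sp \<or> T = Wp" for T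
      using assms(2) that by (auto simp: pos_def tp_def)
    ultimately show ?thesis
      using step_last[OF assms(1,2) _ Suc.prems, of Sp] step_last[OF assms(1,2) _ Suc.prems, of Wp] j1
      by (auto simp: psi_def M_def sg_def L_def)
  qed
  finally show ?case by (simp add: A_def M_def)
qed


lemma pos_ne:
  assumes "r \<ge> 2" "0 < j" "j < 2 * (r - 1)"
  shows "pos r Sp j \<noteq> (U, Sp 1)" "pos r Wp j \<noteq> (U, Sp 1)"
  using assms by (auto simp: pos_def tp_def)

lemma pow_id_even:
  assumes "k \<ge> 3" "r \<ge> 2" "grover_pow_id (cycle_two_tails k r) m"
  shows "even m"
proof (rule ccontr)
  assume odd: "\<not> even m"
  define L where "L = 2 * (r - 1)"
  have p0: "pos r T 0 = (U, T 1)" if "T = Sp \<or> T = Wp" for T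
    using assms(2) that by (auto simp: pos_def tp_def)
  have a1: "(U, Sp 1) \<in> arcs (cycle_two_tails k r)"
    using pos_arc[OF assms(1,2), of Sp 0] p0[of Sp] assms(2) by simp
  have a2: "(U, Wp 1) \<in> arcs (cycle_two_tails k r)"
    using pos_arc[OF assms(1,2), of Wp 0] p0[of Wp] assms(2) by simp
  have "psi r m (U, Sp 1) = 1"
    using main_claim[OF assms(1,2) a1, of m] assms(3) a1 a2
    by (simp add: grover_pow_id_def mat_id_def)
  moreover have "m mod L \<noteq> 0"
  proof
    assume "m mod L = 0"
    then have "L dvd m" by auto
    moreover have "2 dvd L" by (simp add: L_def)
    ultimately have "2 dvd m" by (rule dvd_trans[rotated])
    with odd show False by simp
  qed
  then have "psi r m (U, Sp 1) = 0"
    using pos_ne[OF assms(2), of "m mod L"] assms(2)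
    by (simp add: psi_def L_def)
  ultimately show False by simp
qed

theorem theorem3p1:
  fixes k r :: nat
  assumes "odd k" and "k \<ge> 3" and "r \<ge> 2"
  shows "\<not> odd_periodic (cycle_two_tails k r)"
proof
  assume "odd_periodic (cycle_two_tails k r)"
  then have per: "periodic (cycle_two_tails k r)" and od: "odd (period (cycle_two_tails k r))"
    by (auto simp: odd_periodic_def)
  from per obtain m where "m > 0" "grover_pow_id (cycle_two_tails k r) m"
    by (auto simp: periodic_def)
  then have ex: "\<exists>m. m > 0 \<and> grover_pow_id (cycle_two_tails k r) m" by blast
  have "period (cycle_two_tails k r) > 0 \<and> grover_pow_id (cycle_two_tails k r) (period (cycle_two_tails k r))"
    unfolding period_def by (rule LeastI_ex[OF ex])
  then have "even (period (cycle_two_tails k r))" using pow_id_even assms(2,3) by blast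
  with od show False by simp
qed

end
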